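(* Let $2\le k<n$ and let $A$ be an antipodal $k$-splitting of $Q_2^n$. Then $|u_1\cap u_2|\ge 2$ for all $u_1,u_2\in\beta(A)$.
   Context: $Q_2^n=\{0,1\}^n$. For $0\le m\le n$, an $m$-face of $Q_2^n$ is given by a tuple $a=(a_1,\dots,a_n)\in\{0,1,*\}^n$ with exactly $m$ entries equal to $*$; it denotes the set $\{x\in Q_2^n : x_i=a_i \text{ whenever } a_i\in\{0,1\}\}$. The direction of a face is the set of positions of its asterisks; two faces are parallel if they have the same direction, and two parallel faces $a,b$ are antipodal if $b_i=1-a_i$ at every non-asterisk position $i$. An antipodal $k$-splitting of $Q_2^n$ is a collection of exactly $2^k$ $(n-k)$-faces whose union is $Q_2^n$ and which contains no pair of parallel non-antipodal faces. For a face $a$, $\beta(a)=\{i: a_i\in\{0,1\}\}$, and $\beta(A)=\{\beta(a): a\in A\}$. *)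

theory Defs
  imports Main
begin

text \<open>A vertex of Q_2^n is a bool list of length n (positions 0..n-1).
  A face is a list over {0,1,*}, encoded as bool option list, None = *.\<close>

definition cube :: "nat \<Rightarrow> bool list set" where
  "cube n = {x. length x = n}"

definition face_dir :: "bool option list \<Rightarrow> nat set" where
  "face_dir a = {i. i < length a \<and> a ! i = None}"

definition is_face :: "nat \<Rightarrow> nat \<Rightarrow> bool option list \<Rightarrow> bool" where
  "is_face n m a \<longleftrightarrow> length a = n \<and> card (face_dir a) = m"

definition face_set :: "bool option list \<Rightarrow> bool list set" where
  "face_set a = {x. length x = length a \<and>
      (\<forall>i < length a. \<forall>c. a ! i = Some c \<longrightarrow> x ! i = c)}"

definition parallel :: "bool option list \<Rightarrow> bool option list \<Rightarrow> bool" where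
  "parallel a b \<longleftrightarrow> length a = length b \<and> face_dir a = face_dir b"

definition antipodal :: "bool option list \<Rightarrow> bool option list \<Rightarrow> bool" where
  "antipodal a b \<longleftrightarrow> parallel a b \<and>
      (\<forall>i < length a. \<forall>c. a ! i = Some c \<longrightarrow> b ! i = Some (\<not> c))"

definition antipodal_splitting :: "nat \<Rightarrow> nat \<Rightarrow> bool option list set \<Rightarrow> bool" where
  "antipodal_splitting n k A \<longleftrightarrow>
     finite A \<and> card A = 2 ^ k \<and>
     (\<forall>a\<in>A. is_face n (n - k) a) \<and>
     (\<Union>a\<in>A. face_set a) = cube n \<and>
     (\<forall>a\<in>A. \<forall>b\<in>A. a \<noteq> b \<and> parallel a b \<longrightarrow> antipodal a b)"

definition beta :: "bool option list \<Rightarrow> nat set" where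
  "beta a = {i. i < length a \<and> a ! i \<noteq> None}"

end

theory Submission
  imports Defs
begin

lemma face_set_Nil: "face_set [] = {[]}"
  by (auto simp: face_set_def)

lemma face_set_None: "face_set (None # a) = (\<lambda>(y,x). y # x) ` (UNIV \<times> face_set a)"
proof (rule set_eqI)
  fix z show "z \<in> face_set (None # a) \<longleftrightarrow> z \<in> (\<lambda>(y,x). y # x) ` (UNIV \<times> face_set a)"
    by (cases z) (auto simp: face_set_def All_less_Suc2)
qed

lemma face_set_Some: "face_set (Some c # a) = (#) c ` face_set a"
proof (rule set_eqI)
  fix z show "z \<in> face_set (Some c # a) \<longleftrightarrow> z \<in> (#) c ` face_set a"
    by (cases z) (auto simp: face_set_def All_less_Suc2)
qed

lemma face_dir_Cons: "face_dir (p # a) = (if p = None then insert 0 (Suc ` face_dir a) else Suc ` face_dir a)"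
proof (rule set_eqI)
  fix i show "i \<in> face_dir (p # a) \<longleftrightarrow> i \<in> (if p = None then insert 0 (Suc ` face_dir a) else Suc ` face_dir a)"
    by (cases i) (auto simp: face_dir_def)
qed

lemma finite_face_set: "finite (face_set a)"
proof -
  have "face_set a \<subseteq> {xs. set xs \<subseteq> UNIV \<and> length xs = length a}" by (auto simp: face_set_def)
  then show ?thesis using finite_lists_length_eq[of "UNIV::bool set"] finite_subset by auto
qed

lemma finite_face_dir: "finite (face_dir a)"
  by (auto simp: face_dir_def)

lemma card_face_set: "card (face_set a) = 2 ^ card (face_dir a)"
proof (induction a)
  case Nil then show ?case by (simp add: face_set_Nil face_dir_def)
next
  case (Cons p a)
  show ?case
  proof (cases p)
    case None
    have "card (face_set (p # a)) = card ((UNIV::bool set) \<times> face_set a)"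
      unfolding None face_set_None by (intro card_image) (auto simp: inj_on_def)
    also have "\<dots> = 2 * card (face_set a)" by (simp add: card_cartesian_product)
    finally show ?thesis using Cons None by (simp add: face_dir_Cons card_image finite_face_dir card_insert_disjoint)
  next
    case (Some c)
    have "card (face_set (p # a)) = card (face_set a)"
      unfolding Some face_set_Some by (rule card_image) (auto simp: inj_on_def)
    then show ?thesis using Cons Some by (simp add: face_dir_Cons card_image)
  qed
qed

lemma cube_eq: "cube n = face_set (replicate n None)"
  by (auto simp: cube_def face_set_def)

lemma card_cube: "card (cube n) = 2 ^ n"
proof -
  have "cube n = {xs. set xs \<subseteq> (UNIV::bool set) \<and> length xs = n}" by (auto simp: cube_def)
  then show ?thesis using card_lists_length_eq[of "UNIV::bool set" n] by simp
qed

lemma beta_eq: "beta a = {..<length a} - face_dir a"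
  by (auto simp: beta_def face_dir_def)

lemma face_dir_eq: "face_dir a = {..<length a} - beta a"
  by (auto simp: beta_def face_dir_def)

lemma card_beta: "card (beta a) = length a - card (face_dir a)"
  unfolding beta_eq by (subst card_Diff_subset) (auto simp: face_dir_def)

lemma common_vertex:
  assumes "length a = length b"
    and "\<And>i c d. i < length a \<Longrightarrow> a ! i = Some c \<Longrightarrow> b ! i = Some d \<Longrightarrow> c = d"
  shows "face_set a \<inter> face_set b \<noteq> {}"
proof -
  define x where "x = map (\<lambda>i. case a ! i of Some c \<Rightarrow> c | None \<Rightarrow> (case b ! i of Some d \<Rightarrow> d | None \<Rightarrow> False)) [0..<length a]"
  have "x \<in> face_set a" by (auto simp: x_def face_set_def)
  moreover have "x \<in> face_set b" using assms
    by (auto simp: x_def face_set_def split: option.splits)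
  ultimately show ?thesis by blast
qed

lemma splitting_basic:
  assumes "antipodal_splitting n k A" "a \<in> A"
  shows "length a = n" "card (face_dir a) = n - k"
  using assms by (auto simp: antipodal_splitting_def is_face_def)

lemma splitting_disjoint:
  assumes sp: "antipodal_splitting n k A" and kn: "k \<le> n"
    and a: "a \<in> A" and b: "b \<in> A" and ab: "a \<noteq> b"
  shows "face_set a \<inter> face_set b = {}"
proof (rule ccontr)
  assume "face_set a \<inter> face_set b \<noteq> {}"
  then obtain x where x: "x \<in> face_set a" "x \<in> face_set b" by blast
  have fin: "finite A" and cA: "card A = 2 ^ k" and un: "(\<Union>a\<in>A. face_set a) = cube n"
    using sp by (auto simp: antipodal_splitting_def)
  have cF: "card (face_set c) = 2 ^ (n - k)" if "c \<in> A" for c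
    using splitting_basic[OF sp that] card_face_set by simp
  have "(\<Sum>c\<in>A. card (face_set c)) = card A * 2 ^ (n - k)" using cF by simp
  also have "\<dots> = 2 ^ n" using cA kn by (simp add: power_add[symmetric])
  finally have S: "(\<Sum>c\<in>A. card (face_set c)) = 2 ^ n" .
  have sub: "(\<Union>c\<in>A. face_set c) \<subseteq> (\<Union>c\<in>A - {b}. face_set c) \<union> (face_set b - {x})"
    using x a ab by blast
  have "card (\<Union>c\<in>A. face_set c) \<le> card ((\<Union>c\<in>A - {b}. face_set c) \<union> (face_set b - {x}))"
    by (rule card_mono[OF _ sub]) (simp add: fin finite_face_set)
  also have "\<dots> \<le> card (\<Union>c\<in>A - {b}. face_set c) + card (face_set b - {x})"
    by (rule card_Un_le)
  also have "\<dots> \<le> (\<Sum>c\<in>A - {b}. card (face_set c)) + (card (face_set b) - 1)"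
    using card_UN_le[of "A - {b}" face_set] fin x by (simp add: finite_face_set)
  also have "\<dots> < (\<Sum>c\<in>A. card (face_set c))"
  proof -
    have "card (face_set b) > 0" using x finite_face_set card_gt_0_iff by blast
    moreover have "(\<Sum>c\<in>A. card (face_set c)) = (\<Sum>c\<in>A - {b}. card (face_set c)) + card (face_set b)"
      using fin b by (simp add: sum.remove)
    ultimately show ?thesis by linarith
  qed
  finally show False using S un card_cube by simp
qed

definition par :: "nat set \<Rightarrow> bool list \<Rightarrow> bool" where
  "par S x = even (card {j\<in>S. x ! j})"

lemma par_flip:
  assumes "finite S" "j \<in> S" "j < length x"
  shows "par S (x[j := \<not> x ! j]) = (\<not> par S x)"
proof (cases "x ! j")
  case True
  have e: "{j'\<in>S. x[j := \<not> x ! j] ! j'} = {j'\<in>S. x ! j'} - {j}"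
    using assms True by (auto simp: nth_list_update)
  have "card {j'\<in>S. x ! j'} > 0" using assms True by (subst card_gt_0_iff) auto
  then show ?thesis unfolding par_def e using assms True
    by (subst card_Diff_singleton) auto
next
  case False
  have e: "{j'\<in>S. x[j := \<not> x ! j] ! j'} = insert j {j'\<in>S. x ! j'}"
    using assms False by (auto simp: nth_list_update)
  show ?thesis unfolding par_def e using assms False by (subst card_insert_disjoint) auto
qed

lemma flip_face:
  assumes "j < length f" "f ! j = None" "x \<in> face_set f"
  shows "x[j := \<not> x ! j] \<in> face_set f"
  using assms by (auto simp: face_set_def nth_list_update)

lemma balanced:
  assumes "finite S" "j \<in> S" "j < length f" "f ! j = None"
  shows "card {x\<in>face_set f. par S x} = card {x\<in>face_set f. \<not> par S x}"
proof (rule bij_betw_same_card[of "\<lambda>x. x[j := \<not> x ! j]"])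
  have len: "length x = length f" if "x \<in> face_set f" for x using that by (simp add: face_set_def)
  show "bij_betw (\<lambda>x. x[j := \<not> x ! j]) {x\<in>face_set f. par S x} {x\<in>face_set f. \<not> par S x}"
    by (rule bij_betw_byWitness[where f'="\<lambda>x. x[j := \<not> x ! j]"])
       (use assms len flip_face par_flip in auto)
qed

lemma par_const:
  assumes "beta f = S" "x \<in> face_set f" "y \<in> face_set f"
  shows "par S x = par S y"
proof -
  have "{j\<in>S. x ! j} = {j\<in>S. y ! j}"
    using assms by (force simp: beta_def face_set_def)
  then show ?thesis by (simp add: par_def)
qed

lemma card_beta_A:
  assumes "antipodal_splitting n k A" "k \<le> n" "a \<in> A"
  shows "card (beta a) = k"
  using splitting_basic[OF assms(1,3)] assms(2) card_beta[of a] by simp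

lemma beta_sub: "beta a \<subseteq> {..<length a}"
  by (auto simp: beta_def)

lemma exists_parallel:
  assumes sp: "antipodal_splitting n k A" and kn: "k \<le> n" and k1: "1 \<le> k" and a: "a \<in> A"
  shows "\<exists>c\<in>A. c \<noteq> a \<and> beta c = beta a"
proof (rule ccontr)
  assume H: "\<not> (\<exists>c\<in>A. c \<noteq> a \<and> beta c = beta a)"
  define S where "S = beta a"
  have fin: "finite A" and un: "(\<Union>a\<in>A. face_set a) = cube n"
    using sp by (auto simp: antipodal_splitting_def)
  have finS: "finite S" unfolding S_def using beta_sub finite_subset by blast
  have cS: "card S = k" unfolding S_def using card_beta_A[OF sp kn a] .
  have la: "length a = n" using splitting_basic[OF sp a] by simp
  define Ev where "Ev = (\<lambda>X. {x\<in>X. par S x})"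
  define Od where "Od = (\<lambda>X. {x\<in>X. \<not> par S x})"
  have bal: "card (Ev (face_set c)) = card (Od (face_set c))" if c: "c \<in> A - {a}" for c
  proof -
    have lc: "length c = n" using splitting_basic[OF sp] c by simp
    have "beta c \<noteq> S" using H c S_def by auto
    moreover have "card (beta c) = k" using card_beta_A[OF sp kn] c by simp
    moreover have "finite (beta c)" using beta_sub[of c] finite_subset by blast
    ultimately have "\<not> S \<subseteq> beta c"
      using card_subset_eq[of "beta c" S] cS by auto
    then obtain j where j: "j \<in> S" "j \<notin> beta c" by blast
    have "j < n" using j la beta_sub[of a] S_def by auto
    then have "c ! j = None" using j lc by (auto simp: beta_def)
    then show ?thesis unfolding Ev_def Od_def using balanced[OF finS j(1)] \<open>j < n\<close> lc by simp
  qed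
  obtain j where j: "j \<in> S" using cS k1 by fastforce
  have jn: "j < n" using j la beta_sub[of a] S_def by auto
  have "card (Ev (cube n)) = card (Od (cube n))"
    unfolding Ev_def Od_def cube_eq using balanced[OF finS j, of "replicate n None"] jn by simp
  moreover have "Ev (cube n) = (\<Union>c\<in>A. Ev (face_set c))" "Od (cube n) = (\<Union>c\<in>A. Od (face_set c))"
    unfolding un[symmetric] Ev_def Od_def by auto
  moreover have disj: "face_set c \<inter> face_set d = {}" if "c \<in> A" "d \<in> A" "c \<noteq> d" for c d
    using splitting_disjoint[OF sp kn that] .
  have "card (\<Union>c\<in>A. Ev (face_set c)) = (\<Sum>c\<in>A. card (Ev (face_set c)))"
    by (rule card_UN_disjoint) (use fin finite_face_set disj in \<open>auto simp: Ev_def\<close>)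
  moreover have "card (\<Union>c\<in>A. Od (face_set c)) = (\<Sum>c\<in>A. card (Od (face_set c)))"
    by (rule card_UN_disjoint) (use fin finite_face_set disj in \<open>auto simp: Od_def\<close>)
  moreover have "(\<Sum>c\<in>A. card (Ev (face_set c))) = (\<Sum>c\<in>A - {a}. card (Ev (face_set c))) + card (Ev (face_set a))"
    using fin a by (simp add: sum.remove)
  moreover have "(\<Sum>c\<in>A. card (Od (face_set c))) = (\<Sum>c\<in>A - {a}. card (Od (face_set c))) + card (Od (face_set a))"
    using fin a by (simp add: sum.remove)
  moreover have "(\<Sum>c\<in>A - {a}. card (Ev (face_set c))) = (\<Sum>c\<in>A - {a}. card (Od (face_set c)))"
    using bal by (rule sum.cong[OF refl])
  ultimately have eq: "card (Ev (face_set a)) = card (Od (face_set a))" by simp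
  have pos: "card (face_set a) > 0"
    using card_face_set[of a] by simp
  then obtain x where x: "x \<in> face_set a" using card_gt_0_iff by fastforce
  show False
  proof (cases "par S x")
    case True
    then have "Ev (face_set a) = face_set a" "Od (face_set a) = {}"
      using par_const[OF S_def[symmetric] x] unfolding Ev_def Od_def by auto
    then show False using eq pos by simp
  next
    case False
    then have "Od (face_set a) = face_set a" "Ev (face_set a) = {}"
      using par_const[OF S_def[symmetric] x] unfolding Ev_def Od_def by auto
    then show False using eq pos by simp
  qed
qed

theorem proposition18:
  fixes n k :: nat and A :: "bool option list set"
  assumes "2 \<le> k" and "k < n" and "antipodal_splitting n k A"
  shows "\<forall>u1 \<in> beta ` A. \<forall>u2 \<in> beta ` A. card (u1 \<inter> u2) \<ge> 2"
proof (intro ballI)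
  fix u1 u2 assume "u1 \<in> beta ` A" "u2 \<in> beta ` A"
  then obtain a b where a: "a \<in> A" and b: "b \<in> A" and u: "u1 = beta a" "u2 = beta b" by blast
  have sp: "antipodal_splitting n k A" and kn: "k \<le> n" using assms by auto
  have la: "length a = n" and lb: "length b = n" using splitting_basic[OF sp] a b by auto
  have ca: "card (beta a) = k" using card_beta_A[OF sp kn a] .
  have finb: "finite (beta b)" using beta_sub finite_subset by blast
  show "card (u1 \<inter> u2) \<ge> 2"
  proof (cases "beta a = beta b")
    case True then show ?thesis using u ca assms(1) by simp
  next
    case ne: False
    then have ab: "a \<noteq> b" by auto
    have disj: "face_set a \<inter> face_set b = {}" using splitting_disjoint[OF sp kn a b ab] .
    have notall: "\<not> (\<forall>i c d. i < n \<longrightarrow> a ! i = Some c \<longrightarrow> b ! i = Some d \<longrightarrow> c = d)"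
      using common_vertex[of a b] disj la lb by auto
    then obtain i c d where i: "i < n" "a ! i = Some c" "b ! i = Some d" "c \<noteq> d" by blast
    have iab: "i \<in> beta a \<inter> beta b" using i la lb by (auto simp: beta_def)
    show ?thesis
    proof (rule ccontr)
      assume "\<not> ?thesis"
      then have "card (beta a \<inter> beta b) \<le> 1" using u by simp
      then have single: "beta a \<inter> beta b = {i}"
        using iab finb card_le_Suc0_iff_eq[of "beta a \<inter> beta b"] by auto
      obtain e where e: "e \<in> A" "e \<noteq> a" "beta e = beta a"
        using exists_parallel[OF sp kn _ a] assms(1) by auto
      have le: "length e = n" using splitting_basic[OF sp] e by auto
      have "parallel a e" unfolding parallel_def using e la le face_dir_eq by metis
      then have ant: "antipodal a e" using sp a e by (auto simp: antipodal_splitting_def)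
      have ei: "e ! i = Some d" using ant i la by (auto simp: antipodal_def)
      have eb: "e \<noteq> b" using e ne by auto
      have "face_set e \<inter> face_set b \<noteq> {}"
      proof (rule common_vertex)
        show "length e = length b" using le lb by simp
      next
        fix j c' d' assume j: "j < length e" "e ! j = Some c'" "b ! j = Some d'"
        then have "j \<in> beta a \<inter> beta b" using e(3) lb le by (auto simp: beta_def)
        then have "j = i" using single by auto
        then show "c' = d'" using j ei i by simp
      qed
      then show False using splitting_disjoint[OF sp kn e(1) b eb] by simp
    qed
  qed
qed

end
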